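(* Suppose $q^{2k}\neq1$. Let $a,b,c$ be pairwise distinct elements of $\{1,\dots,n\}$, and let $\phi_a$ (resp. $\phi_c$) denote either $\psi_a$ or $\psi_a^*$ (resp. $\psi_c$ or $\psi_c^*$). Then in $\mathrm{Cl}_q(n,k)$: \[ [\psi_a\psi_b^*,\psi_b\psi_a^*] = \frac{(\omega_a\omega_b^{-1})^k-(\omega_a\omega_b^{-1})^{-k}}{q^k-q^{-k}},\qquad [\psi_a\psi_b,\psi_b^*\psi_a^*] = \frac{(q\omega_a\omega_b)^k-(q\omega_a\omega_b)^{-k}}{q^k-q^{-k}}, \] \[ [\phi_a\psi_b,\psi_b^*\phi_c]_{q^{\pm k}} = \omega_b^{\mp k}\phi_a\phi_c,\qquad \psi_a\psi_a^*\pm\psi_a^*\psi_a = \frac{q^k\omega_a^k\pm\omega_a^{-k}}{q^k\pm1}, \] where $[A,B]=AB-BA$ and $[A,B]_x=AB-xBA$ (in each identity the signs are taken consistently).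
   Context: Let $\mathbb{k}$ be a field of characteristic different from $2$, let $q\in\mathbb{k}^\times$, and let $n,k$ be positive integers. The quantum Clifford algebra $\mathrm{Cl}_q(n,k)$ is the unital associative $\mathbb{k}$-algebra generated by $\psi_a,\psi_a^*,\omega_a,\omega_a^{-1}$ for $a\in\{1,\dots,n\}$, subject to the relations (for all $a,b\in\{1,\dots,n\}$): $\omega_a\omega_b=\omega_b\omega_a$; $\omega_a\omega_a^{-1}=1$; $\omega_a\psi_b=q^{\delta_{ab}}\psi_b\omega_a$; $\omega_a\psi_b^*=q^{-\delta_{ab}}\psi_b^*\omega_a$; $\psi_a\psi_b+\psi_b\psi_a=0$; $\psi_a^*\psi_b^*+\psi_b^*\psi_a^*=0$; $\psi_a\psi_a^*+q^k\psi_a^*\psi_a=\omega_a^{-k}$; $\psi_a\psi_a^*+q^{-k}\psi_a^*\psi_a=\omega_a^{k}$; and $\psi_a\psi_b^*+\psi_b^*\psi_a=0$ if $a\neq b$. *)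

theory Defs
  imports Main
begin

definition kalg :: "('k::field \<Rightarrow> 'a::ring_1) \<Rightarrow> bool" where
  "kalg sc \<longleftrightarrow> sc 0 = 0 \<and> sc 1 = 1 \<and>
     (\<forall>x y. sc (x + y) = sc x + sc y) \<and> (\<forall>x y. sc (x * y) = sc x * sc y) \<and>
     (\<forall>x z. sc x * z = z * sc x)"

text \<open>Elements psi a, psis a (= psi_a^*), om a (= omega_a), omi a (= omega_a^{-1}),
 a \<in> {1..n}, of a k-algebra satisfy the defining relations of Cl_q(n,k).\<close>
definition cl_rels ::
  "('k::field \<Rightarrow> 'a::ring_1) \<Rightarrow> 'k \<Rightarrow> nat \<Rightarrow> nat \<Rightarrow>
   (nat \<Rightarrow> 'a) \<Rightarrow> (nat \<Rightarrow> 'a) \<Rightarrow> (nat \<Rightarrow> 'a) \<Rightarrow> (nat \<Rightarrow> 'a) \<Rightarrow> bool" where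
  "cl_rels sc q n k psi psis om omi \<longleftrightarrow>
    (\<forall>a\<in>{1..n}. \<forall>b\<in>{1..n}.
       om a * om b = om b * om a \<and>
       om a * omi a = 1 \<and>
       om a * psi b = sc (if a = b then q else 1) * psi b * om a \<and>
       om a * psis b = sc (if a = b then inverse q else 1) * psis b * om a \<and>
       psi a * psi b + psi b * psi a = 0 \<and>
       psis a * psis b + psis b * psis a = 0 \<and>
       psi a * psis a + sc (q ^ k) * psis a * psi a = omi a ^ k \<and>
       psi a * psis a + sc (inverse q ^ k) * psis a * psi a = om a ^ k \<and>
       (a \<noteq> b \<longrightarrow> psi a * psis b + psis b * psi a = 0))"

definition comm :: "'a::ring \<Rightarrow> 'a \<Rightarrow> 'a" where
  "comm x y = x * y - y * x"

definition qcomm :: "('k \<Rightarrow> 'a::ring) \<Rightarrow> 'k \<Rightarrow> 'a \<Rightarrow> 'a \<Rightarrow> 'a" where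
  "qcomm sc t x y = x * y - sc t * y * x"

end

theory Submission
  imports Defs
begin


lemma kalgD:
  assumes "kalg sc"
  shows "sc 0 = 0" "sc 1 = 1" "sc (x + y) = sc x + sc y" "sc (x * y) = sc x * sc y"
    "sc x * z = z * sc x"
  using assms unfolding kalg_def by blast+

lemma sc_minus: assumes "kalg sc" shows "sc (- x) = - sc x"
proof -
  have "sc (- x) + sc x = 0" using kalgD(1)[OF assms] kalgD(3)[OF assms, of "-x" x] by simp
  thus ?thesis by (simp add: eq_neg_iff_add_eq_0)
qed

lemma sc_diff: assumes "kalg sc" shows "sc (x - y) = sc x - sc y"
  using kalgD(3)[OF assms, of x "-y"] sc_minus[OF assms, of y] by simp

lemma sc_power: assumes "kalg sc" shows "sc (x ^ n) = sc x ^ n"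
  by (induction n) (simp_all add: kalgD[OF assms])

lemma sc_pull: assumes "kalg sc" shows "sc y * v * (sc x * u) = sc (y * x) * (v * u)"
proof -
  have "sc y * v * (sc x * u) = sc y * (v * sc x) * u" by (simp add: mult.assoc)
  also have "\<dots> = sc y * (sc x * v) * u" by (simp add: kalgD(5)[OF assms])
  also have "\<dots> = sc (y * x) * (v * u)" by (simp add: kalgD(4)[OF assms] mult.assoc)
  finally show ?thesis .
qed

lemma lin_prod1:
  assumes "kalg sc" "v1*u1 = u1*v1" "v1*u2=u2*v1" "v2*u1=u1*v2" "v2*u2=u2*v2"
  shows "(sc y1 * v1 + sc y2 * v2) * (sc x1 * u1 + sc x2 * u2) =
     sc (y1*x1) * (u1*v1) + sc (y2*x1) * (u1*v2) + sc (y1*x2) * (u2*v1) + sc (y2*x2) * (u2*v2)"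
proof -
  have "(sc y1 * v1 + sc y2 * v2) * (sc x1 * u1 + sc x2 * u2) =
     sc y1 * v1 * (sc x1 * u1) + sc y1 * v1 * (sc x2 * u2) + (sc y2 * v2 * (sc x1 * u1) + sc y2 * v2 * (sc x2 * u2))"
    by (simp only: distrib_left distrib_right add_ac)
  also have "\<dots> = sc (y1*x1) * (v1*u1) + sc (y1*x2) * (v1*u2) + (sc (y2*x1) * (v2*u1) + sc (y2*x2) * (v2*u2))"
    by (simp only: sc_pull[OF assms(1)])
  also have "\<dots> = sc (y1*x1) * (u1*v1) + sc (y1*x2) * (u2*v1) + (sc (y2*x1) * (u1*v2) + sc (y2*x2) * (u2*v2))"
    by (simp only: assms(2-5))
  finally show ?thesis by (simp add: add_ac)
qed

lemma lin_prod2: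
  assumes "kalg sc"
  shows "(sc y1 * u1 + sc y2 * u2) * (sc x1 * v1 + sc x2 * v2) =
     sc (y1*x1) * (u1*v1) + sc (y1*x2) * (u1*v2) + sc (y2*x1) * (u2*v1) + sc (y2*x2) * (u2*v2)"
proof -
  have "(sc y1 * u1 + sc y2 * u2) * (sc x1 * v1 + sc x2 * v2) =
     sc y1 * u1 * (sc x1 * v1) + sc y1 * u1 * (sc x2 * v2) + (sc y2 * u2 * (sc x1 * v1) + sc y2 * u2 * (sc x2 * v2))"
    by (simp only: distrib_left distrib_right add_ac)
  also have "\<dots> = sc (y1*x1) * (u1*v1) + sc (y1*x2) * (u1*v2) + (sc (y2*x1) * (u2*v1) + sc (y2*x2) * (u2*v2))"
    by (simp only: sc_pull[OF assms(1)])
  finally show ?thesis by (simp add: add_ac)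
qed

lemma lin_diff:
  assumes "kalg sc"
  shows "(sc c1 * m1 + sc c2 * m2 + sc c3 * m3 + sc c4 * m4) - (sc d1 * m1 + sc d2 * m2 + sc d3 * m3 + sc d4 * m4)
     = sc (c1 - d1) * m1 + sc (c2 - d2) * m2 + sc (c3 - d3) * m3 + sc (c4 - d4) * m4"
  by (simp add: sc_diff[OF assms] algebra_simps)

lemma comm_pow2:
  fixes x y :: "'a::ring_1"
  assumes "x * y = y * x" shows "x ^ m * y ^ n = y ^ n * x ^ m"
proof -
  have "x ^ m * y = y * x ^ m" by (rule power_commuting_commutes[OF assms])
  hence "y ^ n * x ^ m = x ^ m * y ^ n" by (rule power_commuting_commutes[OF sym])
  thus ?thesis by simp
qed

lemma pow_mult_comm: fixes x y :: "'a::ring_1" shows "x * y = y * x \<Longrightarrow> (x * y) ^ n = x ^ n * y ^ n"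
proof (induction n)
  case 0 then show ?case by simp
next
  case (Suc n)
  have "(x*y)^Suc n = (x*y)^n * (x * y)" by (rule power_Suc2)
  also have "\<dots> = x^n * y^n * (x * y)" using Suc.IH[OF Suc.prems] by (rule arg_cong)
  also have "\<dots> = x^n * (y^n * x) * y" by (simp only: mult.assoc)
  also have "\<dots> = x^n * (x * y^n) * y" using power_commuting_commutes[of y x n] Suc.prems by simp
  also have "\<dots> = x^Suc n * y^Suc n" by (simp only: power_Suc2 mult.assoc)
  finally show ?case .
qed

lemma sc_prod_pow:
  assumes alg: "kalg sc" and uv: "u * v = v * u"
  shows "(sc t * u * v) ^ k = sc (t ^ k) * (u ^ k * v ^ k)"
proof -
  have cm: "(sc t * u) * v = v * (sc t * u)"
  proof -
    have "(sc t * u) * v = sc t * (v * u)" by (simp only: mult.assoc uv)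
    also have "\<dots> = (sc t * v) * u" by (simp only: mult.assoc)
    also have "\<dots> = (v * sc t) * u" by (simp only: kalgD(5)[OF alg])
    finally show ?thesis by (simp only: mult.assoc)
  qed
  have "(sc t * u * v) ^ k = (sc t * u) ^ k * v ^ k" by (rule pow_mult_comm[OF cm])
  also have "(sc t * u) ^ k = sc t ^ k * u ^ k" by (rule pow_mult_comm[OF kalgD(5)[OF alg]])
  finally show ?thesis by (simp only: sc_power[OF alg] mult.assoc)
qed

lemma sc_lcomm:
  assumes alg: "kalg sc"
  shows "sc r * (sc Q * P) = sc Q * (sc r * P)" and "sc r * sc Q = sc Q * sc r"
proof -
  show c: "sc r * sc Q = sc Q * sc r" by (rule kalgD(5)[OF alg])
  show "sc r * (sc Q * P) = sc Q * (sc r * P)" by (simp only: mult.assoc[symmetric] c)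
qed

lemma lin_rhs2:
  assumes alg: "kalg sc"
  shows "sc e * (sc Q * m1 - sc Qi * m4) = sc (e*Q) * m1 + sc 0 * m2 + sc 0 * m3 + sc (-(e*Qi)) * m4"
  by (simp add: kalgD(1,4)[OF alg] sc_minus[OF alg] algebra_simps sc_lcomm[OF alg])

lemma lin_rhs1:
  assumes alg: "kalg sc"
  shows "sc e * (m2 - m3) = sc 0 * m1 + sc e * m2 + sc (- e) * m3 + sc 0 * m4"
  by (simp add: kalgD(1)[OF alg] sc_minus[OF alg] algebra_simps)

lemma lin2_add: "(a::'a::ring_1) + b + (c + d) = (a + c) + (b + d)"
  by (simp add: algebra_simps)

lemma lin2_sc:
  assumes alg: "kalg sc"
  shows "sc a * P + sc b * M + (sc c * P + sc d * M) = sc (a + c) * P + sc (b + d) * M"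
    and "sc a * P + sc b * M - (sc c * P + sc d * M) = sc (a - c) * P + sc (b - d) * M"
    and "sc r * (sc Q * P + M) = sc (r * Q) * P + sc r * M"
    and "sc r * (sc Q * P - M) = sc (r * Q) * P + sc (- r) * M"
  by (simp_all add: kalgD(3,4)[OF alg] sc_diff[OF alg] sc_minus[OF alg] algebra_simps sc_lcomm[OF alg])

lemma scal:
  fixes Q Qi e :: "'k::field"
  assumes Q0: "Q \<noteq> 0" and D: "Q - Qi \<noteq> 0" and p1: "Q + 1 \<noteq> 0" and m1: "Q - 1 \<noteq> 0"
    and Qi: "Qi = inverse Q" and e: "e = inverse (Q - Qi)"
  shows "(1 + Qi * e) * (1 + Qi * e) - (- e) * (- e) = e * Q"
    and "(- (Qi * e)) * (1 + Qi * e) - (- e) * e = 0"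
    and "(1 + Qi * e) * (- (Qi * e)) - e * (- e) = 0"
    and "(- (Qi * e)) * (- (Qi * e)) - e * e = - (e * Qi)"
    and "(1 + Qi * e) + (- e) = inverse (Q + 1) * Q"
    and "(- (Qi * e)) + e = inverse (Q + 1)"
    and "(1 + Qi * e) - (- e) = inverse (Q - 1) * Q"
    and "(- (Qi * e)) - e = - (inverse (Q - 1))"
proof -
  define d where "d = (Q + 1) * (Q - 1)"
  have d0: "d \<noteq> 0" using p1 m1 d_def by simp
  have QQ: "Q * Q = d + 1" unfolding d_def by (simp add: algebra_simps)
  have e': "e = Q / d" using e Qi Q0 d0 unfolding d_def QQ[symmetric]
    by (simp add: field_simps)
  have Qi': "Qi = 1 / Q" using Qi by (simp add: field_simps)
  have QQ1: "Q * Q - 1 \<noteq> 0" using d0 QQ by simp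
  have k1: "Qi * e = 1 / d" unfolding e' Qi' using Q0 by simp
  have k1': "e * Qi = 1 / d" using k1 by (simp add: mult.commute)
  have k2: "e * e = (d + 1) / (d * d)" unfolding e' QQ[symmetric] by simp
  have k3: "e * Q = (d + 1) / d" unfolding e' QQ[symmetric] by simp
  show "(1 + Qi * e) * (1 + Qi * e) - (- e) * (- e) = e * Q"
  proof -
    have "(1 + Qi * e) * (1 + Qi * e) - (- e) * (- e) = (1 + Qi * e) * (1 + Qi * e) - e * e" by simp
    also have "\<dots> = (d + 1) / d" unfolding k1 k2 using d0 by (simp add: field_simps)
    finally show ?thesis using k3 by simp
  qed
  show "(- (Qi * e)) * (1 + Qi * e) - (- e) * e = 0"
  proof -
    have "(- (Qi * e)) * (1 + Qi * e) - (- e) * e = (- (Qi * e)) * (1 + Qi * e) + e * e" by simp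
    also have "\<dots> = 0" unfolding k1 k2 using d0 by (simp add: field_simps)
    finally show ?thesis .
  qed
  show "(1 + Qi * e) * (- (Qi * e)) - e * (- e) = 0"
  proof -
    have "(1 + Qi * e) * (- (Qi * e)) - e * (- e) = (1 + Qi * e) * (- (Qi * e)) + e * e" by simp
    also have "\<dots> = 0" unfolding k1 k2 using d0 by (simp add: field_simps)
    finally show ?thesis .
  qed
  show "(- (Qi * e)) * (- (Qi * e)) - e * e = - (e * Qi)"
    unfolding k1 k1' k2 using d0 by (simp add: field_simps)
  have h1: "(Q + 1) / d = inverse (Q - 1)" unfolding d_def using p1 m1 QQ1 by (simp add: field_simps)
  have h2: "(Q - 1) / d = inverse (Q + 1)" unfolding d_def using p1 m1 QQ1 by (simp add: field_simps)
  have ee: "e = Q / d" by (rule e')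
  show "(1 + Qi * e) + (- e) = inverse (Q + 1) * Q"
  proof -
    have "(1 + Qi * e) + (- e) = 1 - (Q - 1) / d" unfolding k1 by (simp add: ee diff_divide_distrib)
    also have "\<dots> = 1 - inverse (Q + 1)" by (simp only: h2)
    also have "\<dots> = inverse (Q + 1) * Q" using p1 by (simp add: field_simps)
    finally show ?thesis .
  qed
  show "(- (Qi * e)) + e = inverse (Q + 1)"
  proof -
    have "(- (Qi * e)) + e = (Q - 1) / d" unfolding k1 by (simp add: ee diff_divide_distrib)
    thus ?thesis by (simp only: h2)
  qed
  show "(1 + Qi * e) - (- e) = inverse (Q - 1) * Q"
  proof -
    have "(1 + Qi * e) - (- e) = 1 + (Q + 1) / d" unfolding k1 by (simp add: ee add_divide_distrib)
    also have "\<dots> = 1 + inverse (Q - 1)" by (simp only: h1)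
    also have "\<dots> = inverse (Q - 1) * Q" using m1 by (simp add: field_simps)
    finally show ?thesis .
  qed
  show "(- (Qi * e)) - e = - (inverse (Q - 1))"
  proof -
    have "(- (Qi * e)) - e = - ((Q + 1) / d)" unfolding k1 by (simp add: ee add_divide_distrib)
    thus ?thesis by (simp only: h1)
  qed
qed

lemma anti_even:
  fixes x s t :: "'a::ring_1"
  assumes h1: "x * s = - (s * x)" and h2: "x * t = - (t * x)"
  shows "x * (s * t) = (s * t) * x"
proof -
  have "x * (s * t) = (x * s) * t" by (simp only: mult.assoc)
  also have "\<dots> = - (s * (x * t))" by (simp only: h1 mult_minus_left mult.assoc)
  also have "\<dots> = s * (t * x)" by (simp only: h2 mult_minus_right minus_minus)
  also have "\<dots> = (s * t) * x" by (simp only: mult.assoc)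
  finally show ?thesis .
qed

lemma qc_lemma:
  fixes pa s t pc z :: "'a::ring_1"
  assumes "pa*s = -(s*pa)" "pa*t = -(t*pa)" "pc*s = -(s*pc)" "pc*t = -(t*pc)" "pc*pa = -(pa*pc)"
  shows "pa*s*(t*pc) - z*(t*pc)*(pa*s) = (s*t + z*(t*s)) * pa * pc"
proof -
  have "pa*s*(t*pc) = (pa*(s*t))*pc" by (simp only: mult.assoc)
  also have "\<dots> = s*t*pa*pc" by (simp only: anti_even[OF assms(1,2)])
  finally have e1: "pa*s*(t*pc) = s*t*pa*pc" .
  have "pc*pa*s = pc*(pa*s)" by (simp only: mult.assoc)
  also have "\<dots> = - ((pc*s)*pa)" by (simp only: assms(1) mult_minus_right mult.assoc)
  also have "\<dots> = s*(pc*pa)" by (simp only: assms(3) mult_minus_left minus_minus mult.assoc)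
  finally have e2: "pc*pa*s = s*(pc*pa)" .
  have "t*pc*(pa*s) = t*(pc*pa*s)" by (simp add: mult.assoc)
  also have "\<dots> = - (t*s*pa*pc)" using e2 assms(5) by (simp add: mult.assoc)
  finally have e3: "t*pc*(pa*s) = - (t*s*pa*pc)" .
  show ?thesis using e1 e3 by (simp add: algebra_simps)
qed


lemma cl_relsD:
  assumes "cl_rels sc q n k psi psis om omi" "a \<in> {1..n}" "b \<in> {1..n}"
  shows "om a * om b = om b * om a"
    and "om a * omi a = 1"
    and "om a * psi b = sc (if a = b then q else 1) * psi b * om a"
    and "om a * psis b = sc (if a = b then inverse q else 1) * psis b * om a"
    and "psi a * psi b + psi b * psi a = 0"
    and "psis a * psis b + psis b * psis a = 0"
    and "psi a * psis a + sc (q ^ k) * psis a * psi a = omi a ^ k"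
    and "psi a * psis a + sc (inverse q ^ k) * psis a * psi a = om a ^ k"
    and "a \<noteq> b \<Longrightarrow> psi a * psis b + psis b * psi a = 0"
proof -
  have "\<forall>a\<in>{1..n}. \<forall>b\<in>{1..n}.
       om a * om b = om b * om a \<and>
       om a * omi a = 1 \<and>
       om a * psi b = sc (if a = b then q else 1) * psi b * om a \<and>
       om a * psis b = sc (if a = b then inverse q else 1) * psis b * om a \<and>
       psi a * psi b + psi b * psi a = 0 \<and>
       psis a * psis b + psis b * psis a = 0 \<and>
       psi a * psis a + sc (q ^ k) * psis a * psi a = omi a ^ k \<and>
       psi a * psis a + sc (inverse q ^ k) * psis a * psi a = om a ^ k \<and>
       (a \<noteq> b \<longrightarrow> psi a * psis b + psis b * psi a = 0)"
    using assms(1) unfolding cl_rels_def .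
  note C = bspec[OF bspec[OF this assms(2)] assms(3)]
  show "om a * om b = om b * om a" using C by (rule conjunct1)
  show "om a * omi a = 1" using C[THEN conjunct2] by (rule conjunct1)
  show "om a * psi b = sc (if a = b then q else 1) * psi b * om a"
    using C[THEN conjunct2, THEN conjunct2] by (rule conjunct1)
  show "om a * psis b = sc (if a = b then inverse q else 1) * psis b * om a"
    using C[THEN conjunct2, THEN conjunct2, THEN conjunct2] by (rule conjunct1)
  show "psi a * psi b + psi b * psi a = 0"
    using C[THEN conjunct2, THEN conjunct2, THEN conjunct2, THEN conjunct2] by (rule conjunct1)
  show "psis a * psis b + psis b * psis a = 0"
    using C[THEN conjunct2, THEN conjunct2, THEN conjunct2, THEN conjunct2, THEN conjunct2] by (rule conjunct1)
  show "psi a * psis a + sc (q ^ k) * psis a * psi a = omi a ^ k"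
    using C[THEN conjunct2, THEN conjunct2, THEN conjunct2, THEN conjunct2, THEN conjunct2, THEN conjunct2] by (rule conjunct1)
  show "psi a * psis a + sc (inverse q ^ k) * psis a * psi a = om a ^ k"
    using C[THEN conjunct2, THEN conjunct2, THEN conjunct2, THEN conjunct2, THEN conjunct2, THEN conjunct2, THEN conjunct2] by (rule conjunct1)
  show "a \<noteq> b \<Longrightarrow> psi a * psis b + psis b * psi a = 0"
    using C[THEN conjunct2, THEN conjunct2, THEN conjunct2, THEN conjunct2, THEN conjunct2, THEN conjunct2, THEN conjunct2, THEN conjunct2] by (rule mp)
qed

lemma anticomm:
  assumes rels: "cl_rels sc q n k psi psis om omi"
    and i: "i \<in> {1..n}" and j: "j \<in> {1..n}" and ij: "i \<noteq> j"
    and x: "x \<in> {psi i, psis i}" and y: "y \<in> {psi j, psis j}"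
  shows "x * y = - (y * x)"
proof -
  have "x * y + y * x = 0"
  proof -
    have ji: "j \<noteq> i" using ij by simp
    have f1: "psi i * psi j + psi j * psi i = 0" by (rule cl_relsD(5)[OF rels i j])
    have f2: "psis i * psis j + psis j * psis i = 0" by (rule cl_relsD(6)[OF rels i j])
    have f3: "psi i * psis j + psis j * psi i = 0" by (rule cl_relsD(9)[OF rels i j ij])
    have f4: "psis i * psi j + psi j * psis i = 0"
      using cl_relsD(9)[OF rels j i ji] by (simp only: add.commute)
    show ?thesis using x y f1 f2 f3 f4 by blast
  qed
  thus ?thesis by (simp add: eq_neg_iff_add_eq_0)
qed

lemma index_facts:
  assumes alg: "kalg sc" and rels: "cl_rels sc q n k psi psis om omi"
    and i: "i \<in> {1..n}" and q0: "q \<noteq> 0" and k: "0 < k"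
    and D: "q ^ k - inverse q ^ k \<noteq> 0"
  shows "psis i * psi i = sc (- inverse (q ^ k - inverse q ^ k)) * om i ^ k
            + sc (inverse (q ^ k - inverse q ^ k)) * omi i ^ k"
    and "psi i * psis i = sc (1 + inverse q ^ k * inverse (q ^ k - inverse q ^ k)) * om i ^ k
            + sc (- (inverse q ^ k * inverse (q ^ k - inverse q ^ k))) * omi i ^ k"
    and "omi i * om i = 1"
proof -
  let ?Q = "q ^ k" and ?Qi = "inverse q ^ k"
  let ?e = "inverse (q ^ k - inverse q ^ k)"
  let ?X = "psi i * psis i" and ?Y = "psis i * psi i"
  let ?P = "om i ^ k" and ?M = "omi i ^ k"
  have R: "om i * omi i = 1"
       "om i * psi i = sc q * psi i * om i"
       "om i * psis i = sc (inverse q) * psis i * om i"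
       "psi i * psis i + sc (q ^ k) * psis i * psi i = omi i ^ k"
       "psi i * psis i + sc (inverse q ^ k) * psis i * psi i = om i ^ k"
    using cl_relsD(2,7,8)[OF rels i i] cl_relsD(3,4)[OF rels i i] by simp_all
  have h1: "?X + sc ?Q * ?Y = ?M" using R(4) by (simp add: mult.assoc)
  have h2: "?X + sc ?Qi * ?Y = ?P" using R(5) by (simp add: mult.assoc)
  have "(?X + sc ?Q * ?Y) - (?X + sc ?Qi * ?Y) = ?M - ?P" using h1 h2 by simp
  hence "sc ?Q * ?Y - sc ?Qi * ?Y = ?M - ?P" by (simp only: add_diff_cancel_left)
  hence "sc (?Q - ?Qi) * ?Y = ?M - ?P" by (simp add: sc_diff[OF alg] left_diff_distrib)
  hence "sc ?e * (sc (?Q - ?Qi) * ?Y) = sc ?e * (?M - ?P)" by simp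
  hence hY0: "?Y = sc ?e * (?M - ?P)" using D
    by (simp add: mult.assoc[symmetric] kalgD(4)[OF alg, symmetric] kalgD(2)[OF alg])
  show hY: "?Y = sc (- ?e) * ?P + sc ?e * ?M"
    using hY0 by (simp add: sc_minus[OF alg] algebra_simps)
  have "?X = ?P - sc ?Qi * ?Y" using h2 by (simp add: algebra_simps)
  also have "\<dots> = ?P - sc ?Qi * (sc (- ?e) * ?P + sc ?e * ?M)" using hY by simp
  also have "\<dots> = sc (1 + ?Qi * ?e) * ?P + sc (- (?Qi * ?e)) * ?M"
    by (simp add: sc_minus[OF alg] kalgD(1-4)[OF alg] algebra_simps)
  finally show "?X = sc (1 + ?Qi * ?e) * ?P + sc (- (?Qi * ?e)) * ?M" .
  have scq: "sc q * sc (inverse q) = 1" "sc (inverse q) * sc q = 1"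
    using q0 by (simp_all add: kalgD(4)[OF alg, symmetric] kalgD(2)[OF alg])
  have cX: "om i * ?X = ?X * om i"
  proof -
    have "om i * ?X = sc q * psi i * (om i * psis i)" by (simp add: R(2) mult.assoc[symmetric])
    also have "\<dots> = sc q * psi i * sc (inverse q) * psis i * om i" by (simp add: R(3) mult.assoc)
    also have "\<dots> = sc q * sc (inverse q) * psi i * psis i * om i"
      by (simp add: mult.assoc kalgD(5)[OF alg, of "inverse q"])
    finally show ?thesis using scq by simp
  qed
  have cY: "om i * ?Y = ?Y * om i"
  proof -
    have "om i * ?Y = sc (inverse q) * psis i * (om i * psi i)" by (simp add: R(3) mult.assoc[symmetric])
    also have "\<dots> = sc (inverse q) * psis i * sc q * psi i * om i" by (simp add: R(2) mult.assoc)
    also have "\<dots> = sc (inverse q) * sc q * psis i * psi i * om i"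
      by (simp add: mult.assoc kalgD(5)[OF alg, of q])
    finally show ?thesis using scq by simp
  qed
  have cM: "om i * ?M = ?M * om i"
  proof -
    have "om i * (sc ?Q * ?Y) = (om i * sc ?Q) * ?Y" by (simp only: mult.assoc)
    also have "\<dots> = sc ?Q * (om i * ?Y)" by (simp only: kalgD(5)[OF alg] mult.assoc)
    finally have z: "om i * (sc ?Q * ?Y) = sc ?Q * (om i * ?Y)" .
    have "om i * ?M = om i * ?X + sc ?Q * (om i * ?Y)"
      by (simp only: h1[symmetric] distrib_left z)
    also have "\<dots> = ?M * om i" using cX cY
      by (simp add: h1[symmetric] distrib_right mult.assoc)
    finally show ?thesis .
  qed
  have PM: "?P * ?M = 1" using left_right_inverse_power[OF R(1)] .
  obtain m where km: "k = Suc m" using k by (cases k) auto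
  let ?L = "om i ^ m * ?M"
  have L: "?L * om i = 1"
  proof -
    have "?L * om i = om i ^ m * (om i * ?M)" using cM by (simp add: mult.assoc)
    also have "\<dots> = ?P * ?M" by (simp only: km power_Suc2 mult.assoc)
    finally show ?thesis using PM by simp
  qed
  have "omi i = ?L * om i * omi i" using L by simp
  also have "\<dots> = ?L" by (simp add: mult.assoc R(1))
  finally show "omi i * om i = 1" using L by simp
qed

lemma om_omi_comm:
  assumes rels: "cl_rels sc q n k psi psis om omi"
    and i: "i \<in> {1..n}" and j: "j \<in> {1..n}" and inv: "omi j * om j = 1"
  shows "om i * omi j = omi j * om i"
proof -
  have R: "om i * om j = om j * om i" "om j * omi j = 1"
    using cl_relsD(1)[OF rels i j] cl_relsD(2)[OF rels j j] by simp_all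
  have "omi j * om i = omi j * om i * (om j * omi j)" using R(2) by simp
  also have "\<dots> = omi j * (om i * om j) * omi j" by (simp add: mult.assoc)
  also have "\<dots> = (omi j * om j) * om i * omi j" by (simp add: R(1) mult.assoc)
  finally show ?thesis using inv by simp
qed

theorem lemma3p16:
  fixes sc :: "'k::field \<Rightarrow> 'a::ring_1"
    and q :: 'k and n k :: nat
    and psi psis om omi :: "nat \<Rightarrow> 'a"
    and a b c :: nat
  assumes char: "(2::'k) \<noteq> 0"
    and q0: "q \<noteq> 0" and n: "0 < n" and k: "0 < k"
    and alg: "kalg sc"
    and rels: "cl_rels sc q n k psi psis om omi"
    and q2k: "q ^ (2 * k) \<noteq> 1"
    and abc: "a \<in> {1..n}" "b \<in> {1..n}" "c \<in> {1..n}"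
    and dist: "a \<noteq> b" "b \<noteq> c" "a \<noteq> c"
  shows
    "comm (psi a * psis b) (psi b * psis a) =
       sc (inverse (q ^ k - inverse q ^ k)) *
         ((om a * omi b) ^ k - (omi a * om b) ^ k)
     \<and> comm (psi a * psi b) (psis b * psis a) =
       sc (inverse (q ^ k - inverse q ^ k)) *
         ((sc q * om a * om b) ^ k - (sc (inverse q) * omi a * omi b) ^ k)
     \<and> (\<forall>pa\<in>{psi a, psis a}. \<forall>pc\<in>{psi c, psis c}.
       qcomm sc (q ^ k) (pa * psi b) (psis b * pc) = omi b ^ k * pa * pc \<and>
       qcomm sc (inverse q ^ k) (pa * psi b) (psis b * pc) = om b ^ k * pa * pc)
     \<and> psi a * psis a + psis a * psi a =
       sc (inverse (q ^ k + 1)) * (sc (q ^ k) * om a ^ k + omi a ^ k)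
     \<and> psi a * psis a - psis a * psi a =
       sc (inverse (q ^ k - 1)) * (sc (q ^ k) * om a ^ k - omi a ^ k)"
  
proof -
  let ?Q = "q ^ k" and ?Qi = "inverse q ^ k"
  let ?e = "inverse (q ^ k - inverse q ^ k)"
  let ?x1 = "1 + ?Qi * ?e" and ?x2 = "- (?Qi * ?e)" and ?y1 = "- ?e" and ?y2 = "?e"
  have Qi: "?Qi = inverse ?Q" by (simp add: power_inverse)
  have Q0: "?Q \<noteq> 0" using q0 by simp
  have Q2: "?Q * ?Q \<noteq> 1" using q2k by (simp add: power_add[symmetric] mult_2)
  have D: "?Q - ?Qi \<noteq> 0"
  proof
    assume "?Q - ?Qi = 0"
    hence "?Q = inverse ?Q" using Qi by simp
    hence "?Q * ?Q = 1" using Q0 by (metis right_inverse)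
    thus False using Q2 by simp
  qed
  have Qp1: "?Q + 1 \<noteq> 0" and Qm1: "?Q - 1 \<noteq> 0"
  proof -
    show "?Q + 1 \<noteq> 0"
    proof
      assume "?Q + 1 = 0" hence "?Q = -1" by (simp add: eq_neg_iff_add_eq_0)
      thus False using Q2 by simp
    qed
    show "?Q - 1 \<noteq> 0" using Q2 by auto
  qed
  note IA = index_facts[OF alg rels abc(1) q0 k D]
  note IB = index_facts[OF alg rels abc(2) q0 k D]
  note IC = index_facts[OF alg rels abc(3) q0 k D]
  have ac: "\<And>i j x y. i \<in> {1..n} \<Longrightarrow> j \<in> {1..n} \<Longrightarrow> i \<noteq> j \<Longrightarrow> x \<in> {psi i, psis i}
      \<Longrightarrow> y \<in> {psi j, psis j} \<Longrightarrow> x * y = - (y * x)"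
    using anticomm[OF rels] by blast
  have omab: "om a * om b = om b * om a" "om a * omi a = 1" "om b * omi b = 1"
    using cl_relsD(1)[OF rels abc(1,2)] cl_relsD(2)[OF rels abc(1,1)] cl_relsD(2)[OF rels abc(2,2)] by simp_all
  have c1: "om a * omi b = omi b * om a" by (rule om_omi_comm[OF rels abc(1,2) IB(3)])
  have c2: "om b * omi a = omi a * om b" by (rule om_omi_comm[OF rels abc(2,1) IA(3)])
  have c3: "omi a * omi b = omi b * omi a"
  proof -
    have "omi a * omi b = omi a * omi b * (om a * omi a)" using omab by simp
    also have "\<dots> = omi a * (om a * omi b) * omi a" using c1 by (simp add: mult.assoc)
    also have "\<dots> = omi b * omi a" using IA(3) by (simp add: mult.assoc[symmetric])
    finally show ?thesis .
  qed
  let ?Pa = "om a ^ k" and ?Ma = "omi a ^ k" and ?Pb = "om b ^ k" and ?Mb = "omi b ^ k"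
  have C1: "?Pb * ?Pa = ?Pa * ?Pb" using comm_pow2[of "om b" "om a"] omab(1) by simp
  have C2: "?Pb * ?Ma = ?Ma * ?Pb" using comm_pow2[OF c2] .
  have C3: "?Mb * ?Pa = ?Pa * ?Mb" using comm_pow2[OF c1[symmetric]] .
  have C4: "?Mb * ?Ma = ?Ma * ?Mb" using comm_pow2[OF c3[symmetric]] .
  note LP1 = lin_prod1[OF alg C1 C2 C3 C4]
  note LP2 = lin_prod2[OF alg, of _ ?Pa _ ?Ma _ ?Pb _ ?Mb]
  note LD = lin_diff[OF alg, of _ "?Pa * ?Pb" _ "?Pa * ?Mb" _ "?Ma * ?Pb" _ "?Ma * ?Mb"]
  have sc0: "sc 0 = 0" by (rule kalgD(1)[OF alg])
  have S1: "?y2 * ?x1 - ?y1 * ?x2 = ?e" "?y1 * ?x2 - ?y2 * ?x1 = - ?e"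
    by (simp_all add: algebra_simps)
  have id1: "comm (psi a * psis b) (psi b * psis a) =
       sc ?e * ((om a * omi b) ^ k - (omi a * om b) ^ k)"
  proof -
    have T1: "psi a * psis b * (psi b * psis a) = (psis b * psi b) * (psi a * psis a)"
      using anti_even[of "psi a" "psis b" "psi b"] ac[OF abc(1,2) dist(1), of "psi a"]
      by (simp add: mult.assoc[symmetric])
    have T2: "psi b * psis a * (psi a * psis b) = (psis a * psi a) * (psi b * psis b)"
      using anti_even[of "psi b" "psis a" "psi a"] ac[OF abc(2,1) dist(1)[symmetric], of "psi b"]
      by (simp add: mult.assoc[symmetric])
    have "comm (psi a * psis b) (psi b * psis a) =
       (sc 0 * (?Pa * ?Pb) + sc ?e * (?Pa * ?Mb) + sc (- ?e) * (?Ma * ?Pb) + sc 0 * (?Ma * ?Mb))"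
      unfolding comm_def T1 T2 IA(1) IA(2) IB(1) IB(2) LP1 LP2 LD diff_self S1 by (rule refl)
    also have "\<dots> = sc ?e * (?Pa * ?Mb - ?Ma * ?Pb)"
      by (rule lin_rhs1[OF alg, symmetric])
    also have "\<dots> = sc ?e * ((om a * omi b) ^ k - (omi a * om b) ^ k)"
      using pow_mult_comm[OF c1] pow_mult_comm[OF c2[symmetric]] by simp
    finally show ?thesis .
  qed

  have SC: "?x1 * ?x1 - ?y1 * ?y1 = ?e * ?Q"
    "?x2 * ?x1 - ?y1 * ?y2 = 0"
    "?x1 * ?x2 - ?y2 * ?y1 = 0"
    "?x2 * ?x2 - ?y2 * ?y2 = - (?e * ?Qi)"
    "?x1 + ?y1 = inverse (?Q + 1) * ?Q"
    "?x2 + ?y2 = inverse (?Q + 1)"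
    "?x1 - ?y1 = inverse (?Q - 1) * ?Q"
    "?x2 - ?y2 = - (inverse (?Q - 1))"
    using scal[OF Q0 D Qp1 Qm1 Qi refl] by simp_all
  have id2: "comm (psi a * psi b) (psis b * psis a) =
       sc ?e * ((sc q * om a * om b) ^ k - (sc (inverse q) * omi a * omi b) ^ k)"
  proof -
    have T1: "psi a * psi b * (psis b * psis a) = (psi b * psis b) * (psi a * psis a)"
      using anti_even[of "psi a" "psi b" "psis b"] ac[OF abc(1,2) dist(1), of "psi a"]
      by (simp add: mult.assoc[symmetric])
    have T2: "psis b * psis a * (psi a * psi b) = (psis a * psi a) * (psis b * psi b)"
      using anti_even[of "psis b" "psis a" "psi a"] ac[OF abc(2,1) dist(1)[symmetric], of "psis b"]
      by (simp add: mult.assoc[symmetric])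
    have "comm (psi a * psi b) (psis b * psis a) =
       (sc (?e * ?Q) * (?Pa * ?Pb) + sc 0 * (?Pa * ?Mb) + sc 0 * (?Ma * ?Pb) + sc (- (?e * ?Qi)) * (?Ma * ?Mb))"
      unfolding comm_def T1 T2 IA(1) IA(2) IB(1) IB(2) LP1 LP2 LD SC(1-4) by (rule refl)
    also have "\<dots> = sc ?e * (sc ?Q * (?Pa * ?Pb) - sc ?Qi * (?Ma * ?Mb))"
      by (rule lin_rhs2[OF alg, symmetric])
    also have "\<dots> = sc ?e * ((sc q * om a * om b) ^ k - (sc (inverse q) * omi a * omi b) ^ k)"
      using sc_prod_pow[OF alg omab(1), of q k] sc_prod_pow[OF alg c3, of "inverse q" k] by simp
    finally show ?thesis .
  qed
  have id3: "\<forall>pa\<in>{psi a, psis a}. \<forall>pc\<in>{psi c, psis c}.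
       qcomm sc (q ^ k) (pa * psi b) (psis b * pc) = omi b ^ k * pa * pc \<and>
       qcomm sc (inverse q ^ k) (pa * psi b) (psis b * pc) = om b ^ k * pa * pc"
  proof (intro ballI)
    fix pa pc assume pa: "pa \<in> {psi a, psis a}" and pc: "pc \<in> {psi c, psis c}"
    have s: "psi b \<in> {psi b, psis b}" and t: "psis b \<in> {psi b, psis b}" by simp_all
    have A1: "pa * psi b = - (psi b * pa)" by (rule ac[OF abc(1,2) dist(1) pa s])
    have A2: "pa * psis b = - (psis b * pa)" by (rule ac[OF abc(1,2) dist(1) pa t])
    have A3: "pc * psi b = - (psi b * pc)" by (rule ac[OF abc(3,2) dist(2)[symmetric] pc s])
    have A4: "pc * psis b = - (psis b * pc)" by (rule ac[OF abc(3,2) dist(2)[symmetric] pc t])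
    have A5: "pc * pa = - (pa * pc)" by (rule ac[OF abc(3,1) dist(3)[symmetric] pc pa])
    have R7: "psi b * psis b + sc (q ^ k) * (psis b * psi b) = omi b ^ k"
      using cl_relsD(7)[OF rels abc(2,2)] by (simp only: mult.assoc)
    have R8: "psi b * psis b + sc (inverse q ^ k) * (psis b * psi b) = om b ^ k"
      using cl_relsD(8)[OF rels abc(2,2)] by (simp only: mult.assoc)
    show "qcomm sc (q ^ k) (pa * psi b) (psis b * pc) = omi b ^ k * pa * pc \<and>
       qcomm sc (inverse q ^ k) (pa * psi b) (psis b * pc) = om b ^ k * pa * pc"
      unfolding qcomm_def qc_lemma[OF A1 A2 A3 A4 A5] R7 R8 by (rule conjI refl)+
  qed
  have id4: "psi a * psis a + psis a * psi a =
       sc (inverse (q ^ k + 1)) * (sc (q ^ k) * om a ^ k + omi a ^ k)"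
    unfolding IA(1) IA(2) lin2_sc(1)[OF alg] SC(5,6) lin2_sc(3)[OF alg] by (rule refl)
  have id5: "psi a * psis a - psis a * psi a =
       sc (inverse (q ^ k - 1)) * (sc (q ^ k) * om a ^ k - omi a ^ k)"
    unfolding IA(1) IA(2) lin2_sc(2)[OF alg] SC(7,8) lin2_sc(4)[OF alg] by (rule refl)
  show ?thesis using id1 id2 id3 id4 id5 by (intro conjI)
qed


end
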